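(* Let $f:\mathbb{R}^N\to\mathbb{R}^N$ be $C^1$ with equilibrium $x_\ast$, and fix $T>0$. Suppose there exist a real $\lambda_\ast>0$ and $n\in\mathbb{Z}$ with $\lambda_\ast+\frac{2\pi n i}{T}\in\sigma(f'(x_\ast))$. Let $K\in\mathbb{R}^{N\times N}$ satisfy $\sigma(K)\subseteq\mathbb{R}$ and $f'(x_\ast)K=Kf'(x_\ast)$. Then $\det(\lambda I-f'(x_\ast)-K[1-e^{-\lambda T}])=0$ has a root with $\mathrm{Re}\,\lambda>0$; in particular $x_\ast$ is unstable as a solution of $\dot x(t)=f(x(t))+K[x(t)-x(t-T)]$.
   Context: Eigenvalues of the linearized delay equation $\dot y(t)=f'(x_\ast)y(t)+K[y(t)-y(t-T)]$ are the roots of $\lambda\mapsto\det(\lambda I-f'(x_\ast)-K[1-e^{-\lambda T}])$. *)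

theory Defs
  imports "HOL-Analysis.Analysis"
begin

definition cmat :: "real^'n^'n \<Rightarrow> complex^'n^'n" where
  "cmat M = (\<chi> i j. complex_of_real (M $ i $ j))"

definition cspectrum :: "complex^'n^'n \<Rightarrow> complex set" where
  "cspectrum M = {\<mu>. \<exists>v. v \<noteq> 0 \<and> M *v v = \<mu> *s v}"

definition C1_map :: "(real^'n \<Rightarrow> real^'n) \<Rightarrow> bool" where
  "C1_map f \<longleftrightarrow> (\<exists>J :: real^'n \<Rightarrow> real^'n^'n.
      (\<forall>x. (f has_derivative (\<lambda>h. J x *v h)) (at x)) \<and> continuous_on UNIV J)"

end

theory Submission
  imports Defs "HOL-Computational_Algebra.Fundamental_Theorem_Algebra"
begin

definition pv :: "'a::field^'n^'n \<Rightarrow> 'a^'n \<Rightarrow> 'a poly \<Rightarrow> 'a^'n" where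
  "pv K v p = (\<Sum>i\<le>degree p. coeff p i *s (((*v) K) ^^ i) v)"

lemma pv_N:
  assumes "degree p < N"
  shows "pv K v p = (\<Sum>i<N. coeff p i *s (((*v) K) ^^ i) v)"
proof -
  have "{..degree p} \<subseteq> {..<N}" using assms by auto
  moreover have "\<forall>i\<in>{..<N} - {..degree p}. coeff p i *s (((*v) K) ^^ i) v = 0"
    by (auto simp: coeff_eq_0)
  ultimately show ?thesis unfolding pv_def
    by (intro sum.mono_neutral_left) auto
qed

lemma pv_add: "pv K v (p + q) = pv K v p + pv K v q"
proof -
  define N where "N = Suc (max (degree p) (degree q))"
  have "degree (p+q) < N" using degree_add_le_max[of p q] unfolding N_def by linarith
  then show ?thesis
    by (simp add: pv_N[of _ N] N_def sum.distrib vector_sadd_rdistrib less_Suc_eq_le)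
qed

lemma pv_smult: "pv K v (smult c p) = c *s pv K v p"
proof -
  have "degree (smult c p) < Suc (degree p)" using degree_smult_le[of c p] by linarith
  then show ?thesis
    by (simp add: pv_N[of _ "Suc (degree p)"] scalar_mult_eq_scaleR vec.scale_sum_right
         vector_smult_assoc)
qed

lemma pv_minus: "pv K v (- p) = - pv K v p"
  using pv_smult[of K v "-1" p] by simp

lemma pv_diff: "pv K v (p - q) = pv K v p - pv K v q"
  using pv_add[of K v p "-q"] pv_minus[of K v q] by simp

lemma pv_0[simp]: "pv K v 0 = 0"
  by (simp add: pv_def)

lemma pv_sum: "pv K v (\<Sum>i\<in>I. f i) = (\<Sum>i\<in>I. pv K v (f i))"
  by (induction I rule: infinite_finite_induct) (auto simp: pv_add)

lemma pv_monom: "pv K v (monom c k) = c *s (((*v) K) ^^ k) v"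
proof -
  have "degree (monom c k) < Suc k" using degree_monom_le[of c k] by linarith
  then have "pv K v (monom c k) = (\<Sum>i<Suc k. coeff (monom c k) i *s (((*v) K) ^^ i) v)"
    by (rule pv_N)
  also have "\<dots> = c *s (((*v) K) ^^ k) v"
    by (simp add: coeff_monom)
  finally show ?thesis .
qed

lemma pv_const: "pv K v [:c:] = c *s v"
  using pv_monom[of K v c 0] by (simp add: monom_0)

lemma pv_pCons0: "pv K v (pCons 0 q) = K *v pv K v q"
proof -
  define N where "N = Suc (degree q)"
  have d: "degree (pCons 0 q) < Suc N" unfolding N_def
    by (metis degree_pCons_le le_imp_less_Suc Suc_le_mono le_trans order_refl)
  have "pv K v (pCons 0 q) = (\<Sum>i<Suc N. coeff (pCons 0 q) i *s (((*v) K) ^^ i) v)"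
    by (rule pv_N[OF d])
  also have "\<dots> = (\<Sum>i<N. coeff q i *s (((*v) K) ^^ Suc i) v)"
    by (subst sum.lessThan_Suc_shift) simp
  also have "\<dots> = K *v (\<Sum>i<N. coeff q i *s (((*v) K) ^^ i) v)"
    by (simp add: vec.sum vec.scale)
  also have "\<dots> = K *v pv K v q" by (simp add: pv_N[of _ N] N_def)
  finally show ?thesis .
qed

lemma pv_eig:
  fixes A K :: "'a::field^'n^'n"
  assumes comm: "A ** K = K ** A" and v: "A *v v = m *s v"
  shows "A *v pv K v p = m *s pv K v p"
proof -
  have F: "A *v (((*v) K) ^^ i) v = m *s (((*v) K) ^^ i) v" for i
  proof (induction i)
    case 0 then show ?case using v by simp
  next
    case (Suc i)
    have "A *v (K *v (((*v) K) ^^ i) v) = K *v (A *v (((*v) K) ^^ i) v)"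
      by (simp add: matrix_vector_mul_assoc comm)
    then show ?case using Suc by (simp add: vec.scale)
  qed
  show ?thesis unfolding pv_def
    by (simp add: vec.sum vec.scale F vec.scale_sum_right vector_smult_assoc mult.commute)
qed

lemma exists_annih:
  fixes K :: "'a::field^'n^'n"
  shows "\<exists>p. p \<noteq> 0 \<and> pv K v p = 0"
proof -
  define F where "F i = (((*v) K) ^^ i) v" for i
  define N where "N = CARD('n)"
  show ?thesis
  proof (cases "inj_on F {..N}")
    case False
    then obtain i j where ij: "i \<le> N" "j \<le> N" "i \<noteq> j" "F i = F j"
      unfolding inj_on_def by auto
    define p where "p = monom (1::'a) i - monom 1 j"
    have "coeff p i = 1" using ij by (simp add: p_def coeff_monom)
    then have "p \<noteq> 0" by auto
    moreover have "pv K v p = 0"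
      using ij by (simp add: p_def pv_diff pv_monom F_def[symmetric])
    ultimately show ?thesis by blast
  next
    case True
    define S where "S = F ` {..N}"
    have cS: "card S = Suc N" using True by (simp add: S_def card_image)
    have "vec.dim S \<le> N"
      using vec.dim_subset[of S UNIV] vec_dim_card[where ?'a='a and ?'n='n] by (simp add: N_def)
    then have "vec.dependent S"
      using cS by (intro vec.dependent_biggerset_general) simp
    then obtain u where u: "\<exists>w\<in>S. u w \<noteq> 0" "(\<Sum>w\<in>S. u w *s w) = 0"
      using vec.dependent_finite[of S] by (auto simp: S_def)
    define p where "p = (\<Sum>i\<le>N. monom (u (F i)) i)"
    have cp: "coeff p k = u (F k)" if "k \<le> N" for k
      using that by (simp add: p_def coeff_sum coeff_monom)
    from u(1) obtain k where "k \<le> N" "u (F k) \<noteq> 0" by (auto simp: S_def)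
    then have "p \<noteq> 0" using cp by force
    moreover have "pv K v p = (\<Sum>i\<le>N. u (F i) *s F i)"
      by (simp add: p_def pv_sum pv_monom F_def)
    moreover have "(\<Sum>i\<le>N. u (F i) *s F i) = (\<Sum>w\<in>S. u w *s w)"
      unfolding S_def using True by (simp add: sum.reindex)
    ultimately show ?thesis using u(2) by auto
  qed
qed

lemma common_eig:
  fixes A K :: "complex^'n^'n"
  assumes comm: "A ** K = K ** A" and v: "v \<noteq> 0" "A *v v = m *s v"
  shows "\<exists>w r. w \<noteq> 0 \<and> A *v w = m *s w \<and> K *v w = r *s w"
proof -
  define d where "d = (LEAST d. \<exists>p. p \<noteq> 0 \<and> pv K v p = 0 \<and> degree p = d)"
  have ex: "\<exists>d p. p \<noteq> 0 \<and> pv K v p = 0 \<and> degree p = d"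
    using exists_annih[of K v] by blast
  obtain p where p: "p \<noteq> 0" "pv K v p = 0" "degree p = d"
    using LeastI_ex[OF ex] unfolding d_def by blast
  have minim: "pv K v q \<noteq> 0" if "q \<noteq> 0" "degree q < d" for q
    using not_less_Least[of "degree q" "\<lambda>d. \<exists>p. p \<noteq> 0 \<and> pv K v p = 0 \<and> degree p = d"]
      that unfolding d_def by blast
  have "d \<noteq> 0"
  proof
    assume "d = 0"
    then obtain c where "p = [:c:]" using p(3) by (metis degree_eq_zeroE)
    then have "c \<noteq> 0" "c *s v = 0" using p pv_const[of K v c] by auto
    then show False using v(1) by (simp add: vec_eq_iff)
  qed
  then have "\<not> (\<exists>a l. a \<noteq> 0 \<and> l = 0 \<and> p = pCons a l)" using p(3) by auto
  then obtain r where "poly p r = 0" using fundamental_theorem_of_algebra_alt by blast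
  then obtain q where q: "p = [:-r, 1:] * q" using poly_eq_0_iff_dvd by blast
  then have "q \<noteq> 0" using p(1) by auto
  moreover have "degree q < d"
  proof -
    have "degree ([:-r, 1:] * q) = degree [:-r, 1:] + degree q"
      using \<open>q \<noteq> 0\<close> by (intro degree_mult_eq) auto
    then show ?thesis using q p(3) by simp
  qed
  ultimately have w0: "pv K v q \<noteq> 0" by (rule minim)
  have e: "[:-r, 1:] * q = smult (-r) q + pCons 0 q" by (simp add: mult_pCons_left)
  have "pv K v ([:-r, 1:] * q) = (-r) *s pv K v q + K *v pv K v q"
    unfolding e pv_add pv_smult pv_pCons0 ..
  then have z: "(-r) *s pv K v q + K *v pv K v q = 0" using p(2) q by simp
  have "K *v pv K v q = ((-r) *s pv K v q + K *v pv K v q) + r *s pv K v q"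
    by (simp add: vec_eq_iff)
  then have "K *v pv K v q = r *s pv K v q" using z by simp
  then show ?thesis using w0 pv_eig[OF comm v(2)] by blast
qed

lemma mat_mult_vec: "mat c *v x = c *s (x::'a::comm_ring_1^'n)"
proof -
  have "(\<Sum>j\<in>UNIV. (if i = j then c else 0) * x $ j) = c * x $ i" for i
    by (simp add: if_distrib[of "\<lambda>a. a * _"] cong: if_cong)
  then show ?thesis by (simp add: vec_eq_iff matrix_vector_mult_def mat_def)
qed

lemma cmat_mult: "cmat (A ** K) = cmat A ** cmat K"
  by (simp add: cmat_def matrix_matrix_mult_def vec_eq_iff)

lemma det_zero_if_ker:
  fixes M :: "'a::field^'n^'n"
  assumes "w \<noteq> 0" "M *v w = 0"
  shows "det M = 0"
proof (rule ccontr)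
  assume "det M \<noteq> 0"
  then have "invertible M" by (simp add: invertible_det_nz)
  then obtain B where "B ** M = mat 1" unfolding invertible_def by blast
  then have "\<forall>x. M *v x = 0 \<longrightarrow> x = 0" using matrix_left_invertible_ker by blast
  then show False using assms by blast
qed

lemma real_root:
  fixes lam0 k T :: real
  assumes "lam0 > 0" "T > 0"
  shows "\<exists>x>0. x - lam0 - k * (1 - exp (- x * T)) = 0"
proof -
  define g where "g x = x - lam0 - k * (1 - exp (- x * T))" for x
  define b where "b = lam0 + \<bar>k\<bar> + 1"
  have cont: "continuous_on {0..b} g" unfolding g_def by (intro continuous_intros)
  have "0 < b * T" using assms by (simp add: b_def)
  then have "0 \<le> 1 - exp (- b * T)" "1 - exp (- b * T) \<le> 1"
    by auto
  then have "k * (1 - exp (- b * T)) \<le> \<bar>k\<bar>"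
    by (metis abs_ge_self abs_mult abs_of_nonneg mult_left_le order.trans mult.commute abs_ge_zero)
  then have gb: "0 \<le> g b" by (simp add: g_def b_def)
  have g0: "g 0 < 0" using assms by (simp add: g_def)
  have "0 \<le> b" using assms by (simp add: b_def)
  then obtain x where x: "0 \<le> x" "x \<le> b" "g x = 0" using IVT'[of g 0 0 b] g0 gb cont by auto
  then have "x \<noteq> 0" using g0 by auto
  then have "x > 0" using x(1) by simp
  then show ?thesis using x(3) unfolding g_def by blast
qed

theorem corollary4:
  fixes f :: "real^'n \<Rightarrow> real^'n"
    and xs :: "real^'n"
    and A K :: "real^'n^'n"
    and T lam0 :: real
    and n :: int
  assumes f_C1: "C1_map f"
    and equil: "f xs = 0"
    and A_deriv: "(f has_derivative (\<lambda>h. A *v h)) (at xs)"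
    and T_pos: "T > 0"
    and lam0_pos: "lam0 > 0"
    and eig: "complex_of_real lam0 + 2 * of_real pi * of_int n * \<i> / complex_of_real T
                \<in> cspectrum (cmat A)"
    and K_real_spec: "\<forall>\<mu> \<in> cspectrum (cmat K). Im \<mu> = 0"
    and commute: "A ** K = K ** A"
  shows "\<exists>z::complex. Re z > 0 \<and>
           det (mat z - cmat A - mat (1 - exp (- z * complex_of_real T)) ** cmat K) = 0"
proof -
  define mu where "mu = complex_of_real lam0 + 2 * of_real pi * of_int n * \<i> / complex_of_real T"
  obtain v where v: "v \<noteq> 0" "cmat A *v v = mu *s v"
    using eig unfolding mu_def cspectrum_def by blast
  have comm: "cmat A ** cmat K = cmat K ** cmat A"
    using commute by (simp add: cmat_mult[symmetric])
  obtain w r where w: "w \<noteq> 0" "cmat A *v w = mu *s w" "cmat K *v w = r *s w"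
    using common_eig[OF comm v] by blast
  have "r \<in> cspectrum (cmat K)" using w unfolding cspectrum_def by blast
  then have "Im r = 0" using K_real_spec by blast
  then have r: "r = complex_of_real (Re r)" by (simp add: complex_eq_iff)
  define k where "k = Re r"
  obtain x where x: "x > 0" "x - lam0 - k * (1 - exp (- x * T)) = 0"
    using real_root[OF lam0_pos T_pos] by blast
  define z where "z = complex_of_real x + 2 * of_real pi * of_int n * \<i> / complex_of_real T"
  have Rez: "Re z > 0" using x by (simp add: z_def)
  have eqz: "- z * complex_of_real T = complex_of_real (- x * T) + (- (complex_of_real (2 * of_int n * pi) * \<i>))"
    using T_pos by (simp add: z_def field_simps)
  have "exp (- z * complex_of_real T) = exp (complex_of_real (- x * T)) * exp (- (complex_of_real (2 * of_int n * pi) * \<i>))"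
    by (subst eqz, rule exp_add)
  also have "exp (- (complex_of_real (2 * of_int n * pi) * \<i>)) = 1"
    using exp_integer_2pi[of "of_int n"] by (simp add: exp_minus)
  finally have ez0: "exp (- z * complex_of_real T) = exp (complex_of_real (- x * T))"
    by simp
  have ez: "exp (- z * complex_of_real T) = complex_of_real (exp (- x * T))"
    unfolding ez0 by (rule exp_of_real)
  define c where "c = 1 - exp (- z * complex_of_real T)"
  have c: "c = complex_of_real (1 - exp (- x * T))" unfolding c_def ez by simp
  have "z - mu - c * r = complex_of_real (x - lam0 - k * (1 - exp (- x * T)))"
    by (subst r) (simp add: z_def mu_def c k_def)
  then have zero: "z - mu - c * r = 0" using x(2) by (simp only: of_real_0)
  have "(mat z - cmat A - mat c ** cmat K) *v w = z *s w - mu *s w - c *s (r *s w)"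
    by (simp add: matrix_vector_mult_diff_rdistrib matrix_vector_mul_assoc[symmetric]
        mat_mult_vec w)
  also have "\<dots> = (z - mu - c * r) *s w"
    by (simp add: vec_eq_iff algebra_simps)
  finally have "(mat z - cmat A - mat c ** cmat K) *v w = 0" using zero by simp
  then have "det (mat z - cmat A - mat c ** cmat K) = 0" using det_zero_if_ker[OF w(1)] by blast
  then show ?thesis using Rez unfolding c_def by blast
qed

end
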